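(* Let $V=\bigoplus_{i=1}^n B_i$ be a near vector space over a commutative $F$ with finitely many blocks. Then each block $B_i$ (embedded as $0\oplus\cdots\oplus B_i\oplus\cdots\oplus 0$) and the quasi-kernel $Q(V)=\bigcup_{i=1}^n B_i$ are definable in $V$ by quantifier-free formulas of the language $\mathcal L_{\bar F nvs}=\{+,0,(\lambda)_{\lambda\in\bar F}\}$ (equivalently, by formulas of $\mathcal L_{Fnvs}$ that are quantifier free modulo the quantifier-free definable functions of $\bar F$).
   Context: A near vector space $(V,F)$: $(V,+)$ a group, $F$ a set of endomorphisms containing $0,1,-1$, with $F\setminus\{0\}$ a subgroup of $\mathrm{Aut}(V,+)$ acting fixed point freely ($\alpha x=\beta x\Rightarrow\alpha=\beta$ or $x=0$), such that the quasi-kernel $Q(V)=\{u:\forall\alpha,\beta\in F\,\exists\gamma\in F\ \alpha u+\beta u=\gamma u\}$ generates $V$. Commutative: $\alpha(\beta v)=\beta(\alpha v)$. The blocks of $V$ are the summands in André's decomposition of $V$ into maximal regular near vector subspaces (regular: any two nonzero quasi-kernel elements $u,v$ satisfy $u+\lambda v\in Q(V)$ for some $\lambda\neq0$), each nonzero element of $Q(V)$ lying in exactly one block. $\bar F$ is the set of formal finite sums $\alpha_1+_\cdot\cdots+_\cdot\alpha_n$ of elements of $F$ acting by $v\mapsto\alpha_1(v)+\cdots+\alpha_n(v)$. $\mathcal L_{Fnvs}=\{+,0,(\lambda)_{\lambda\in F}\}$ and $\mathcal L_{\bar Fnvs}=\{+,0,(\lambda)_{\lambda\in\bar F}\}$,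 with unary function symbols interpreted as the actions. *)

theory Defs
  imports Main
begin

text \<open>The group (V,+) is the whole type 'v (class group_add); F is a set of maps 'v => 'v.\<close>

definition is_subgroup :: "'v::group_add set \<Rightarrow> bool" where
  "is_subgroup H \<longleftrightarrow> 0 \<in> H \<and> (\<forall>x\<in>H. \<forall>y\<in>H. x + y \<in> H) \<and> (\<forall>x\<in>H. - x \<in> H)"

definition gen_subgroup :: "'v::group_add set \<Rightarrow> 'v set" where
  "gen_subgroup S = \<Inter>{H. is_subgroup H \<and> S \<subseteq> H}"

definition quasi_kernel :: "('v::group_add \<Rightarrow> 'v) set \<Rightarrow> 'v set" where
  "quasi_kernel F = {u. \<forall>\<alpha>\<in>F. \<forall>\<beta>\<in>F. \<exists>\<gamma>\<in>F. \<alpha> u + \<beta> u = \<gamma> u}"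

definition near_vector_space :: "('v::group_add \<Rightarrow> 'v) set \<Rightarrow> bool" where
  "near_vector_space F \<longleftrightarrow>
     (\<forall>\<alpha>\<in>F. \<forall>x y. \<alpha> (x + y) = \<alpha> x + \<alpha> y) \<and>
     (\<lambda>x. 0) \<in> F \<and> id \<in> F \<and> uminus \<in> F \<and>
     (\<forall>\<alpha>\<in>F - {\<lambda>x. 0}. bij \<alpha>) \<and>
     (\<forall>\<alpha>\<in>F - {\<lambda>x. 0}. \<forall>\<beta>\<in>F - {\<lambda>x. 0}. \<alpha> \<circ> \<beta> \<in> F - {\<lambda>x. 0}) \<and>
     (\<forall>\<alpha>\<in>F - {\<lambda>x. 0}. inv \<alpha> \<in> F - {\<lambda>x. 0}) \<and>
     (\<forall>\<alpha>\<in>F. \<forall>\<beta>\<in>F. \<forall>x. \<alpha> x = \<beta> x \<longrightarrow> \<alpha> = \<beta> \<or> x = 0) \<and>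
     gen_subgroup (quasi_kernel F) = UNIV"

definition commutative_nvs :: "('v \<Rightarrow> 'v) set \<Rightarrow> bool" where
  "commutative_nvs F \<longleftrightarrow> (\<forall>\<alpha>\<in>F. \<forall>\<beta>\<in>F. \<forall>v. \<alpha> (\<beta> v) = \<beta> (\<alpha> v))"

text \<open>A near vector subspace: an F-invariant subgroup W which is a near vector space in its
  own right, i.e. generated by its quasi-kernel Q(W) = Q(V) \<inter> W.\<close>
definition nv_subspace :: "('v::group_add \<Rightarrow> 'v) set \<Rightarrow> 'v set \<Rightarrow> bool" where
  "nv_subspace F W \<longleftrightarrow> is_subgroup W \<and> (\<forall>\<alpha>\<in>F. \<alpha> ` W \<subseteq> W) \<and>
     gen_subgroup (quasi_kernel F \<inter> W) = W"

definition regular_subspace :: "('v::group_add \<Rightarrow> 'v) set \<Rightarrow> 'v set \<Rightarrow> bool" where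
  "regular_subspace F W \<longleftrightarrow> nv_subspace F W \<and>
     (\<forall>u\<in>quasi_kernel F \<inter> W - {0}. \<forall>v\<in>quasi_kernel F \<inter> W - {0}.
        \<exists>c\<in>F. c \<noteq> (\<lambda>x. 0) \<and> u + c v \<in> quasi_kernel F \<inter> W)"

definition is_block :: "('v::group_add \<Rightarrow> 'v) set \<Rightarrow> 'v set \<Rightarrow> bool" where
  "is_block F W \<longleftrightarrow> regular_subspace F W \<and>
     (\<forall>W'. regular_subspace F W' \<and> W \<subseteq> W' \<longrightarrow> W' = W)"

text \<open>V (= UNIV) is the internal direct sum of B 0, ..., B (n-1).\<close>
definition internal_direct_sum :: "(nat \<Rightarrow> 'v::group_add set) \<Rightarrow> nat \<Rightarrow> bool" where
  "internal_direct_sum B n \<longleftrightarrow> (\<forall>i<n. is_subgroup (B i)) \<and>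
     (\<forall>v. \<exists>!b. (\<forall>i<n. b i \<in> B i) \<and> (\<forall>i\<ge>n. b i = 0) \<and> v = sum_list (map b [0..<n]))"

text \<open>An element of Fbar is a formal sum alpha_1 +. ... +. alpha_k (k \<ge> 1) of elements of F,
  represented by the list [alpha_1, ..., alpha_k].\<close>
definition fbar_act :: "('v::monoid_add \<Rightarrow> 'v) list \<Rightarrow> 'v \<Rightarrow> 'v" where
  "fbar_act l v = sum_list (map (\<lambda>\<alpha>. \<alpha> v) l)"

datatype 'f tm = Var | Zero | Plus "'f tm" "'f tm" | App 'f "'f tm"

datatype 'f qf_fm = Eq "'f tm" "'f tm" | Neg "'f qf_fm" | Conj "'f qf_fm" "'f qf_fm"
  | Disj "'f qf_fm" "'f qf_fm"

fun syms_tm :: "'f tm \<Rightarrow> 'f set" where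
  "syms_tm Var = {}" | "syms_tm Zero = {}"
| "syms_tm (Plus s t) = syms_tm s \<union> syms_tm t"
| "syms_tm (App f t) = insert f (syms_tm t)"

fun syms_fm :: "'f qf_fm \<Rightarrow> 'f set" where
  "syms_fm (Eq s t) = syms_tm s \<union> syms_tm t"
| "syms_fm (Neg p) = syms_fm p"
| "syms_fm (Conj p q) = syms_fm p \<union> syms_fm q"
| "syms_fm (Disj p q) = syms_fm p \<union> syms_fm q"

fun eval_tm :: "('v::monoid_add \<Rightarrow> 'v) list tm \<Rightarrow> 'v \<Rightarrow> 'v" where
  "eval_tm Var x = x" | "eval_tm Zero x = 0"
| "eval_tm (Plus s t) x = eval_tm s x + eval_tm t x"
| "eval_tm (App l t) x = fbar_act l (eval_tm t x)"

fun sat :: "('v::monoid_add \<Rightarrow> 'v) list qf_fm \<Rightarrow> 'v \<Rightarrow> bool" where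
  "sat (Eq s t) x \<longleftrightarrow> eval_tm s x = eval_tm t x"
| "sat (Neg p) x \<longleftrightarrow> \<not> sat p x"
| "sat (Conj p q) x \<longleftrightarrow> sat p x \<and> sat q x"
| "sat (Disj p q) x \<longleftrightarrow> sat p x \<or> sat q x"

definition fbar_symbol :: "('v \<Rightarrow> 'v) set \<Rightarrow> ('v \<Rightarrow> 'v) list \<Rightarrow> bool" where
  "fbar_symbol F l \<longleftrightarrow> l \<noteq> [] \<and> set l \<subseteq> F"

definition qf_definable :: "('v::monoid_add \<Rightarrow> 'v) set \<Rightarrow> 'v set \<Rightarrow> bool" where
  "qf_definable F S \<longleftrightarrow> (\<exists>\<phi>. (\<forall>l\<in>syms_fm \<phi>. fbar_symbol F l) \<and> S = {x. sat \<phi> x})"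

end

theory Submission imports Defs begin

locale nvs =
  fixes F :: "('v::group_add \<Rightarrow> 'v) set"
  assumes nv: "near_vector_space F" and cm: "commutative_nvs F"
begin

abbreviation "Z \<equiv> (\<lambda>x::'v. 0::'v)"
abbreviation "Q \<equiv> quasi_kernel F"

lemma NV: "(\<forall>\<alpha>\<in>F. \<forall>x y. \<alpha> (x + y) = \<alpha> x + \<alpha> y) \<and>
     (\<lambda>x. 0) \<in> F \<and> id \<in> F \<and> uminus \<in> F \<and>
     (\<forall>\<alpha>\<in>F - {\<lambda>x. 0}. bij \<alpha>) \<and>
     (\<forall>\<alpha>\<in>F - {\<lambda>x. 0}. \<forall>\<beta>\<in>F - {\<lambda>x. 0}. \<alpha> \<circ> \<beta> \<in> F - {\<lambda>x. 0}) \<and>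
     (\<forall>\<alpha>\<in>F - {\<lambda>x. 0}. inv \<alpha> \<in> F - {\<lambda>x. 0}) \<and>
     (\<forall>\<alpha>\<in>F. \<forall>\<beta>\<in>F. \<forall>x. \<alpha> x = \<beta> x \<longrightarrow> \<alpha> = \<beta> \<or> x = 0) \<and>
     gen_subgroup (quasi_kernel F) = UNIV"
  using nv unfolding near_vector_space_def .

lemma hom: "\<alpha> \<in> F \<Longrightarrow> \<alpha> (x + y) = \<alpha> x + \<alpha> y"
  using NV by (elim conjE) blast
lemma ZF: "Z \<in> F" using NV by (elim conjE) assumption
lemma idF: "id \<in> F" using NV by (elim conjE) assumption
lemma negF: "uminus \<in> F" using NV by (elim conjE) assumption
lemma bijF: "\<alpha> \<in> F \<Longrightarrow> \<alpha> \<noteq> Z \<Longrightarrow> bij \<alpha>" using NV by (elim conjE) blast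
lemma compF': "\<alpha> \<in> F \<Longrightarrow> \<alpha> \<noteq> Z \<Longrightarrow> \<beta> \<in> F \<Longrightarrow> \<beta> \<noteq> Z \<Longrightarrow> \<alpha> \<circ> \<beta> \<in> F \<and> \<alpha> \<circ> \<beta> \<noteq> Z"
  using NV by (elim conjE) blast
lemma invF: "\<alpha> \<in> F \<Longrightarrow> \<alpha> \<noteq> Z \<Longrightarrow> inv \<alpha> \<in> F \<and> inv \<alpha> \<noteq> Z"
  using NV by (elim conjE) blast
lemma fpf: "\<alpha> \<in> F \<Longrightarrow> \<beta> \<in> F \<Longrightarrow> \<alpha> x = \<beta> x \<Longrightarrow> x \<noteq> 0 \<Longrightarrow> \<alpha> = \<beta>"
  using NV by (elim conjE) blast
lemma gen: "gen_subgroup Q = UNIV"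
  using NV by (elim conjE) assumption
lemma comm_ops: "\<alpha> \<in> F \<Longrightarrow> \<beta> \<in> F \<Longrightarrow> \<alpha> (\<beta> v) = \<beta> (\<alpha> v)"
  using cm unfolding commutative_nvs_def by blast

lemma add_comm: "(x::'v) + y = y + x"
proof -
  have "- (-y + -x) = - (-y) + - (-x)" using hom[OF negF, of "-y" "-x"] by simp
  moreover have "- (-y + -x) = x + y" by (simp add: minus_add)
  ultimately show ?thesis by simp
qed

lemma add_lcomm: "(x::'v) + (y + z) = y + (x + z)"
  by (simp add: add.assoc[symmetric] add_comm[of x y])

lemmas ac = add.assoc add_comm add_lcomm

lemma hom0: "\<alpha> \<in> F \<Longrightarrow> \<alpha> 0 = 0"
proof -
  assume a: "\<alpha> \<in> F"
  have "\<alpha> 0 + \<alpha> 0 = \<alpha> 0 + 0" using hom[OF a, of 0 0] by simp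
  thus ?thesis by (simp only: add_left_cancel)
qed

lemma homneg: "\<alpha> \<in> F \<Longrightarrow> \<alpha> (- x) = - \<alpha> x"
  using hom[of \<alpha> x "-x"] hom0[of \<alpha>] by (metis add.right_inverse minus_unique)

lemma compF: "\<alpha> \<in> F \<Longrightarrow> \<beta> \<in> F \<Longrightarrow> \<alpha> \<circ> \<beta> \<in> F"
proof -
  assume a: "\<alpha> \<in> F" "\<beta> \<in> F"
  show ?thesis
  proof (cases "\<alpha> = Z \<or> \<beta> = Z")
    case True
    hence "\<alpha> \<circ> \<beta> = Z" using hom0[OF a(1)] by (auto simp: comp_def)
    thus ?thesis using ZF by simp
  next
    case False thus ?thesis using compF' a by blast
  qed
qed

lemma negcompF: "\<beta> \<in> F \<Longrightarrow> (\<lambda>x. - \<beta> x) \<in> F"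
  using compF[OF negF, of \<beta>] by (simp add: comp_def)

lemma inv_left: "\<alpha> \<in> F \<Longrightarrow> \<alpha> \<noteq> Z \<Longrightarrow> inv \<alpha> (\<alpha> x) = x"
  using bijF by (simp add: bij_is_inj)

lemma Qdef: "u \<in> Q \<Longrightarrow> \<alpha> \<in> F \<Longrightarrow> \<beta> \<in> F \<Longrightarrow> \<exists>\<gamma>\<in>F. \<alpha> u + \<beta> u = \<gamma> u"
  unfolding quasi_kernel_def by blast

lemma Q0: "0 \<in> Q"
  unfolding quasi_kernel_def using hom0 ZF by force

lemma QF: "u \<in> Q \<Longrightarrow> \<delta> \<in> F \<Longrightarrow> \<delta> u \<in> Q"
  unfolding quasi_kernel_def
proof (intro CollectI ballI)
  fix \<alpha> \<beta> assume "u \<in> {u. \<forall>\<alpha>\<in>F. \<forall>\<beta>\<in>F. \<exists>\<gamma>\<in>F. \<alpha> u + \<beta> u = \<gamma> u}" "\<delta> \<in> F" "\<alpha> \<in> F" "\<beta> \<in> F"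
  then obtain \<gamma> where g: "\<gamma> \<in> F" "\<alpha> u + \<beta> u = \<gamma> u" by blast
  have "\<alpha> (\<delta> u) + \<beta> (\<delta> u) = \<delta> (\<alpha> u + \<beta> u)"
    using \<open>\<delta>\<in>F\<close> \<open>\<alpha>\<in>F\<close> \<open>\<beta>\<in>F\<close> by (simp add: hom comm_ops)
  also have "\<dots> = \<gamma> (\<delta> u)" using g \<open>\<delta>\<in>F\<close> by (simp add: comm_ops)
  finally show "\<exists>\<gamma>\<in>F. \<alpha> (\<delta> u) + \<beta> (\<delta> u) = \<gamma> (\<delta> u)" using g by blast
qed

lemma Qdiff: "u \<in> Q \<Longrightarrow> \<alpha> \<in> F \<Longrightarrow> \<beta> \<in> F \<Longrightarrow> \<exists>\<epsilon>\<in>F. \<alpha> u - \<beta> u = \<epsilon> u"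
proof -
  assume u: "u \<in> Q" and a: "\<alpha> \<in> F" and b: "\<beta> \<in> F"
  have nb: "(\<lambda>x. - \<beta> x) \<in> F" using negcompF[OF b] .
  obtain \<gamma> where "\<gamma> \<in> F" "\<alpha> u + (\<lambda>x. - \<beta> x) u = \<gamma> u" using Qdef[OF u a nb] by blast
  hence "\<gamma> \<in> F" "\<alpha> u - \<beta> u = \<gamma> u" by simp_all
  thus ?thesis by blast
qed

lemma swap_eq: "(a::'v) + b = c + d \<Longrightarrow> a - c = d - b"
proof -
  assume h: "a + b = c + d"
  have "a - c = (a + b) + (- b + - c)" by (simp only: diff_conv_add_uminus add.assoc add_minus_cancel)
  also have "\<dots> = (c + d) + (- b + - c)" using h by simp
  also have "\<dots> = d - b"
    by (simp only: add_comm[of c d] add_comm[of "-b" "-c"] add.assoc add_minus_cancel diff_conv_add_uminus)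
  finally show ?thesis .
qed

definition sameadd :: "'v \<Rightarrow> 'v \<Rightarrow> bool" where
  "sameadd u v \<longleftrightarrow> (\<forall>\<alpha>\<in>F. \<forall>\<beta>\<in>F. \<forall>\<gamma>\<in>F. (\<alpha> u + \<beta> u = \<gamma> u \<longleftrightarrow> \<alpha> v + \<beta> v = \<gamma> v))"

lemma sa_refl: "sameadd u u" by (simp add: sameadd_def)
lemma sa_sym: "sameadd u v \<Longrightarrow> sameadd v u" by (simp add: sameadd_def)
lemma sa_trans: "sameadd u v \<Longrightarrow> sameadd v w \<Longrightarrow> sameadd u w" by (simp add: sameadd_def)

lemma L1: assumes "u \<in> Q" "sameadd u v" shows "u + v \<in> Q"
  unfolding quasi_kernel_def
proof (intro CollectI ballI)
  fix \<alpha> \<beta> assume ab: "\<alpha> \<in> F" "\<beta> \<in> F"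
  then obtain \<gamma> where g: "\<gamma> \<in> F" "\<alpha> u + \<beta> u = \<gamma> u" using Qdef assms by blast
  hence "\<alpha> v + \<beta> v = \<gamma> v" using assms ab unfolding sameadd_def by blast
  hence "\<alpha> (u + v) + \<beta> (u + v) = \<gamma> (u + v)" using g ab
    by (simp add: hom ac) (metis add.assoc)
  thus "\<exists>\<gamma>\<in>F. \<alpha> (u + v) + \<beta> (u + v) = \<gamma> (u + v)" using g by blast
qed

lemma L1': assumes "u \<in> Q" "v \<in> Q" "sameadd u v" "u + v \<noteq> 0" shows "sameadd u (u + v)"
  unfolding sameadd_def
proof (intro ballI iffI)
  fix \<alpha> \<beta> \<gamma> assume ab: "\<alpha> \<in> F" "\<beta> \<in> F" "\<gamma> \<in> F"
  { assume g: "\<alpha> u + \<beta> u = \<gamma> u"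
    hence "\<alpha> v + \<beta> v = \<gamma> v" using assms ab unfolding sameadd_def by blast
    thus "\<alpha> (u + v) + \<beta> (u + v) = \<gamma> (u + v)" using g ab
      by (simp add: hom ac) (metis add.assoc) }
  { assume g: "\<alpha> (u + v) + \<beta> (u + v) = \<gamma> (u + v)"
    obtain \<gamma>' where g': "\<gamma>' \<in> F" "\<alpha> u + \<beta> u = \<gamma>' u" using Qdef assms ab by blast
    hence "\<alpha> v + \<beta> v = \<gamma>' v" using assms ab unfolding sameadd_def by blast
    hence "\<alpha> (u + v) + \<beta> (u + v) = \<gamma>' (u + v)" using g' ab
      by (simp add: hom ac) (metis add.assoc)
    hence "\<gamma> = \<gamma>'" using g fpf[of \<gamma> \<gamma>' "u+v"] ab g' assms by simp
    thus "\<alpha> u + \<beta> u = \<gamma> u" using g' by simp }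
qed

lemma L2: assumes "\<delta> \<in> F" "\<delta> \<noteq> Z" shows "sameadd u (\<delta> u)"
  unfolding sameadd_def
proof (intro ballI iffI)
  fix \<alpha> \<beta> \<gamma> assume ab: "\<alpha> \<in> F" "\<beta> \<in> F" "\<gamma> \<in> F"
  { assume "\<alpha> u + \<beta> u = \<gamma> u"
    hence "\<delta> (\<alpha> u + \<beta> u) = \<delta> (\<gamma> u)" by simp
    thus "\<alpha> (\<delta> u) + \<beta> (\<delta> u) = \<gamma> (\<delta> u)" using ab assms by (simp add: hom comm_ops) }
  { assume "\<alpha> (\<delta> u) + \<beta> (\<delta> u) = \<gamma> (\<delta> u)"
    hence "\<delta> (\<alpha> u + \<beta> u) = \<delta> (\<gamma> u)" using ab assms by (simp add: hom comm_ops)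
    hence "inv \<delta> (\<delta> (\<alpha> u + \<beta> u)) = inv \<delta> (\<delta> (\<gamma> u))" by simp
    thus "\<alpha> u + \<beta> u = \<gamma> u" using inv_left assms by simp }
qed

lemma L3: assumes "u \<in> Q" "v \<in> Q" "u + v \<in> Q" "u \<noteq> 0" "v \<noteq> 0" shows "sameadd u v"
proof (cases "\<exists>\<delta>\<in>F. \<delta> \<noteq> Z \<and> v = \<delta> u")
  case True
  then show ?thesis using L2 by blast
next
  case False
  show ?thesis unfolding sameadd_def
  proof (intro ballI)
    fix \<alpha> \<beta> \<gamma> assume ab: "\<alpha> \<in> F" "\<beta> \<in> F" "\<gamma> \<in> F"
    obtain g1 where g1: "g1 \<in> F" "\<alpha> u + \<beta> u = g1 u" using Qdef assms ab by blast
    obtain g2 where g2: "g2 \<in> F" "\<alpha> v + \<beta> v = g2 v" using Qdef assms ab by blast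
    obtain g3 where g3: "g3 \<in> F" "\<alpha> (u+v) + \<beta> (u+v) = g3 (u+v)" using Qdef assms ab by blast
    have "g1 u + g2 v = g3 u + g3 v" using g1 g2 g3 ab by (simp add: hom ac) (metis add.assoc)
    hence e: "g1 u - g3 u = g3 v - g2 v"
      by (rule swap_eq)
    obtain \<epsilon> where ep: "\<epsilon> \<in> F" "g1 u - g3 u = \<epsilon> u" using Qdiff assms g1 g3 by blast
    obtain \<epsilon>' where ep': "\<epsilon>' \<in> F" "g3 v - g2 v = \<epsilon>' v" using Qdiff assms g2 g3 by blast
    have eq: "\<epsilon> u = \<epsilon>' v" using e ep ep' by simp
    have "g1 = g2"
    proof (cases "\<epsilon> = Z")
      case True
      hence "\<epsilon>' v = Z v" using eq by simp
      hence "\<epsilon>' = Z" using fpf ep' ZF assms by blast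
      hence "g1 u = g3 u" "g3 v = g2 v" using True ep ep' by auto
      thus ?thesis using fpf g1 g2 g3 assms by metis
    next
      case nz: False
      have nz': "\<epsilon>' \<noteq> Z"
      proof
        assume "\<epsilon>' = Z"
        hence "\<epsilon> u = Z u" using eq by simp
        thus False using fpf ep ZF assms nz by blast
      qed
      have "v = inv \<epsilon>' (\<epsilon>' v)" using inv_left ep' nz' by simp
      also have "\<dots> = (inv \<epsilon>' \<circ> \<epsilon>) u" using eq by simp
      finally have "v = (inv \<epsilon>' \<circ> \<epsilon>) u" .
      moreover have "inv \<epsilon>' \<circ> \<epsilon> \<in> F \<and> inv \<epsilon>' \<circ> \<epsilon> \<noteq> Z" using compF' invF ep ep' nz nz' by blast
      ultimately show ?thesis using False by blast
    qed
    show "(\<alpha> u + \<beta> u = \<gamma> u) = (\<alpha> v + \<beta> v = \<gamma> v)"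
      using g1 g2 \<open>g1 = g2\<close> fpf ab assms by metis
  qed
qed

lemma L4: assumes "regular_subspace F W" "x \<in> Q \<inter> W" "y \<in> Q \<inter> W" "x \<noteq> 0" "y \<noteq> 0"
  shows "sameadd x y"
proof -
  obtain c where c: "c \<in> F" "c \<noteq> Z" "x + c y \<in> Q" using assms unfolding regular_subspace_def by blast
  have "c y \<noteq> 0"
  proof
    assume "c y = 0"
    hence "c y = Z y" by simp
    thus False using fpf c ZF assms by blast
  qed
  hence "sameadd x (c y)" using L3 c assms QF by blast
  moreover have "sameadd y (c y)" using L2 c by blast
  ultimately show ?thesis using sa_sym sa_trans by blast
qed

lemma reg_parts: "regular_subspace F W \<Longrightarrow> is_subgroup W \<and> (\<forall>\<alpha>\<in>F. \<alpha> ` W \<subseteq> W) \<and> gen_subgroup (Q \<inter> W) = W"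
  by (simp add: regular_subspace_def nv_subspace_def)

lemma gen_self: "is_subgroup H \<Longrightarrow> gen_subgroup H = H"
  unfolding gen_subgroup_def by blast

lemma gen_sub: "is_subgroup H \<Longrightarrow> S \<subseteq> H \<Longrightarrow> gen_subgroup S \<subseteq> H"
  unfolding gen_subgroup_def by blast

lemma gen_mono: "S \<subseteq> T \<Longrightarrow> gen_subgroup S \<subseteq> gen_subgroup T"
  unfolding gen_subgroup_def by blast

lemma G1: assumes "regular_subspace F W" shows "W \<subseteq> Q"
proof -
  have nvW: "nv_subspace F W" using assms regular_subspace_def by blast
  have sW: "is_subgroup W" and iW: "\<forall>\<alpha>\<in>F. \<alpha> ` W \<subseteq> W" and gW: "gen_subgroup (Q \<inter> W) = W"
    using nvW unfolding nv_subspace_def by auto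
  have sQW: "is_subgroup (Q \<inter> W)"
    unfolding is_subgroup_def
  proof (intro conjI ballI)
    show "0 \<in> Q \<inter> W" using Q0 sW unfolding is_subgroup_def by blast
  next
    fix x y assume xy: "x \<in> Q \<inter> W" "y \<in> Q \<inter> W"
    have "x + y \<in> Q"
    proof (cases "x = 0 \<or> y = 0")
      case True thus ?thesis using xy by auto
    next
      case False
      thus ?thesis using L4[OF assms xy] L1 xy by blast
    qed
    thus "x + y \<in> Q \<inter> W" using xy sW unfolding is_subgroup_def by blast
  next
    fix x assume x: "x \<in> Q \<inter> W"
    have "-x \<in> Q" using QF[OF _ negF, of x] x by simp
    thus "- x \<in> Q \<inter> W" using x sW unfolding is_subgroup_def by blast
  qed
  have "W = Q \<inter> W" using gen_self[OF sQW] gW by simp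
  thus ?thesis by blast
qed

lemma Fu_regular: assumes "u \<in> Q" shows "regular_subspace F ((\<lambda>\<alpha>. \<alpha> u) ` F)"
proof -
  let ?W = "(\<lambda>\<alpha>. \<alpha> u) ` F"
  have sub: "?W \<subseteq> Q" using QF assms by blast
  have sg: "is_subgroup ?W"
    unfolding is_subgroup_def
  proof (intro conjI ballI)
    show "0 \<in> ?W" using ZF by force
  next
    fix x y assume "x \<in> ?W" "y \<in> ?W"
    then obtain a b where "a \<in> F" "b \<in> F" "x = a u" "y = b u" by blast
    thus "x + y \<in> ?W" using Qdef[OF assms] by blast
  next
    fix x assume "x \<in> ?W"
    then obtain a where "a \<in> F" "x = a u" by blast
    thus "- x \<in> ?W" using negcompF[of a] by force
  qed
  have inv: "\<forall>\<alpha>\<in>F. \<alpha> ` ?W \<subseteq> ?W"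
  proof (intro ballI subsetI)
    fix \<alpha> x assume "\<alpha> \<in> F" "x \<in> \<alpha> ` ?W"
    then obtain a where "a \<in> F" "x = (\<alpha> \<circ> a) u" by auto
    thus "x \<in> ?W" using compF \<open>\<alpha> \<in> F\<close> by blast
  qed
  have g: "gen_subgroup (Q \<inter> ?W) = ?W" using gen_self[OF sg] sub by (simp add: Int_absorb1)
  have reg: "\<forall>x\<in>Q \<inter> ?W - {0}. \<forall>y\<in>Q \<inter> ?W - {0}. \<exists>c\<in>F. c \<noteq> Z \<and> x + c y \<in> Q \<inter> ?W"
  proof (intro ballI)
    fix x y assume x: "x \<in> Q \<inter> ?W - {0}" and y: "y \<in> Q \<inter> ?W - {0}"
    then obtain a b where ab: "a \<in> F" "b \<in> F" "x = a u" "y = b u" by blast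
    have az: "a \<noteq> Z" using x ab by auto
    have bz: "b \<noteq> Z" using y ab by auto
    define c where "c = a \<circ> inv b"
    have ib: "inv b \<in> F" "inv b \<noteq> Z" using invF[OF ab(2) bz] by simp_all
    have c: "c \<in> F" "c \<noteq> Z" using compF'[OF ab(1) az ib] unfolding c_def by simp_all
    have "c y = x" using ab c_def inv_left bz by simp
    moreover obtain g where "g \<in> F" "a u + a u = g u" using Qdef[OF assms] ab by blast
    ultimately have "x + c y \<in> ?W" using ab by auto
    thus "\<exists>c\<in>F. c \<noteq> Z \<and> x + c y \<in> Q \<inter> ?W" using c sub by blast
  qed
  show ?thesis unfolding regular_subspace_def nv_subspace_def using sg inv g reg by blast
qed

lemma exists_block: assumes "u \<in> Q" shows "\<exists>M. is_block F M \<and> u \<in> M"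
proof -
  let ?A = "{W. regular_subspace F W \<and> u \<in> W}"
  have "\<forall>C\<in>chains ?A. \<exists>U\<in>?A. \<forall>X\<in>C. X \<subseteq> U"
  proof
    fix C assume C: "C \<in> chains ?A"
    show "\<exists>U\<in>?A. \<forall>X\<in>C. X \<subseteq> U"
    proof (cases "C = {}")
      case True
      have "u \<in> (\<lambda>\<alpha>. \<alpha> u) ` F" using idF by (metis id_apply image_eqI)
      hence "(\<lambda>\<alpha>. \<alpha> u) ` F \<in> ?A" using Fu_regular[OF assms] by blast
      thus ?thesis using True by blast
    next
      case ne: False
      have CA: "C \<subseteq> ?A" and ch: "\<forall>X\<in>C. \<forall>Y\<in>C. X \<subseteq> Y \<or> Y \<subseteq> X"
        using C unfolding chains_def chain_subset_def by auto
      let ?U = "\<Union>C"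
      have two: "\<And>x y. x \<in> ?U \<Longrightarrow> y \<in> ?U \<Longrightarrow> \<exists>W\<in>C. x \<in> W \<and> y \<in> W"
        using ch by blast
      have regs: "\<And>W. W \<in> C \<Longrightarrow> regular_subspace F W" using CA by blast
      have sgs: "\<And>W. W \<in> C \<Longrightarrow> is_subgroup W" using reg_parts[OF regs] by blast
      have invs: "\<And>W. W \<in> C \<Longrightarrow> \<forall>\<alpha>\<in>F. \<alpha> ` W \<subseteq> W" using reg_parts[OF regs] by blast
      have gens: "\<And>W. W \<in> C \<Longrightarrow> gen_subgroup (Q \<inter> W) = W" using reg_parts[OF regs] by blast
      have sg: "is_subgroup ?U"
        unfolding is_subgroup_def
      proof (intro conjI ballI)
        show "0 \<in> ?U" using ne sgs unfolding is_subgroup_def by blast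
      next
        fix x y assume "x \<in> ?U" "y \<in> ?U"
        then obtain W where "W \<in> C" "x \<in> W" "y \<in> W" using two by blast
        thus "x + y \<in> ?U" using sgs unfolding is_subgroup_def by blast
      next
        fix x assume "x \<in> ?U"
        thus "- x \<in> ?U" using sgs unfolding is_subgroup_def by blast
      qed
      have inv: "\<forall>\<alpha>\<in>F. \<alpha> ` ?U \<subseteq> ?U" using invs by blast
      have g: "gen_subgroup (Q \<inter> ?U) = ?U"
      proof
        show "gen_subgroup (Q \<inter> ?U) \<subseteq> ?U" using gen_sub[OF sg] by blast
        show "?U \<subseteq> gen_subgroup (Q \<inter> ?U)"
        proof
          fix x assume "x \<in> ?U"
          then obtain W where W: "W \<in> C" "x \<in> W" by blast
          hence "x \<in> gen_subgroup (Q \<inter> W)" using gens by simp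
          moreover have "Q \<inter> W \<subseteq> Q \<inter> ?U" using W by blast
          hence "gen_subgroup (Q \<inter> W) \<subseteq> gen_subgroup (Q \<inter> ?U)" by (rule gen_mono)
          ultimately show "x \<in> gen_subgroup (Q \<inter> ?U)" by blast
        qed
      qed
      have reg: "\<forall>x\<in>Q \<inter> ?U - {0}. \<forall>y\<in>Q \<inter> ?U - {0}. \<exists>c\<in>F. c \<noteq> Z \<and> x + c y \<in> Q \<inter> ?U"
      proof (intro ballI)
        fix x y assume x: "x \<in> Q \<inter> ?U - {0}" and y: "y \<in> Q \<inter> ?U - {0}"
        then obtain W where W: "W \<in> C" "x \<in> W" "y \<in> W" using two by blast
        then obtain c where "c \<in> F" "c \<noteq> Z" "x + c y \<in> Q \<inter> W"
          using regs[OF W(1)] x y unfolding regular_subspace_def by blast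
        thus "\<exists>c\<in>F. c \<noteq> Z \<and> x + c y \<in> Q \<inter> ?U" using W by blast
      qed
      have rU: "regular_subspace F ?U" unfolding regular_subspace_def nv_subspace_def
        using sg inv g reg by (intro conjI)
      obtain W0 where "W0 \<in> C" using ne by blast
      hence "u \<in> ?U" using CA by blast
      hence "?U \<in> ?A" using rU by blast
      thus ?thesis by blast
    qed
  qed
  then obtain M where M: "M \<in> ?A" "\<forall>X\<in>?A. M \<subseteq> X \<longrightarrow> X = M" using Zorn_Lemma2[of ?A] by blast
  have "is_block F M" unfolding is_block_def using M by blast
  thus ?thesis using M by blast
qed

lemma block_sa: assumes "is_block F W" "x \<in> W" "y \<in> W" "x \<noteq> 0" "y \<noteq> 0" shows "sameadd x y"
proof -
  have r: "regular_subspace F W" using assms is_block_def by blast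
  show ?thesis using L4[OF r] G1[OF r] assms by blast
qed

lemma block_props: assumes "is_block F W"
  shows "is_subgroup W" "\<forall>\<alpha>\<in>F. \<alpha> ` W \<subseteq> W" "W \<subseteq> Q"
  using assms G1 unfolding is_block_def regular_subspace_def nv_subspace_def by auto

lemma blocks_eq: assumes bi: "is_block F Bi" and bj: "is_block F Bj" and u: "u \<in> Bi" "u \<noteq> 0"
  and v: "v \<in> Bj" "v \<noteq> 0" and sa: "sameadd u v" shows "Bi = Bj"
proof -
  let ?W = "{a + b |a b. a \<in> Bi \<and> b \<in> Bj}"
  have si: "is_subgroup Bi" and ii: "\<forall>\<alpha>\<in>F. \<alpha> ` Bi \<subseteq> Bi" and qi: "Bi \<subseteq> Q" using block_props[OF bi] by auto
  have sj: "is_subgroup Bj" and ij: "\<forall>\<alpha>\<in>F. \<alpha> ` Bj \<subseteq> Bj" and qj: "Bj \<subseteq> Q" using block_props[OF bj] by auto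
  have saw: "\<And>w. w \<in> ?W \<Longrightarrow> w \<in> Q \<and> (w \<noteq> 0 \<longrightarrow> sameadd u w)"
  proof -
    fix w assume "w \<in> ?W"
    then obtain a b where ab: "a \<in> Bi" "b \<in> Bj" "w = a + b" by blast
    show "w \<in> Q \<and> (w \<noteq> 0 \<longrightarrow> sameadd u w)"
    proof (cases "a = 0")
      case True
      thus ?thesis using ab qj block_sa[OF bj v(1) ab(2) v(2)] sa sa_trans by auto
    next
      case a0: False
      show ?thesis
      proof (cases "b = 0")
        case True
        thus ?thesis using ab qi block_sa[OF bi u(1) ab(1) u(2)] by auto
      next
        case False
        have ua: "sameadd u a" using block_sa[OF bi u(1) ab(1) u(2) a0] .
        have "sameadd v b" using block_sa[OF bj v(1) ab(2) v(2) False] .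
        hence ab': "sameadd a b" using ua sa sa_sym sa_trans by blast
        have "a + b \<in> Q" using L1 ab' ab qi by blast
        moreover have "a + b \<noteq> 0 \<longrightarrow> sameadd u (a + b)"
          using L1'[of a b] ab qi qj ab' ua sa_trans by blast
        ultimately show ?thesis using ab by simp
      qed
    qed
  qed
  have sg: "is_subgroup ?W"
    unfolding is_subgroup_def
  proof (intro conjI ballI)
    show "0 \<in> ?W" using si sj unfolding is_subgroup_def by force
  next
    fix x y assume "x \<in> ?W" "y \<in> ?W"
    then obtain a b a' b' where ab: "a \<in> Bi" "b \<in> Bj" "x = a + b" "a' \<in> Bi" "b' \<in> Bj" "y = a' + b'" by blast
    have "x + y = (a + a') + (b + b')" using ab by (simp add: ac)
    moreover have "a + a' \<in> Bi" "b + b' \<in> Bj" using ab si sj unfolding is_subgroup_def by auto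
    ultimately show "x + y \<in> ?W" by blast
  next
    fix x assume "x \<in> ?W"
    then obtain a b where ab: "a \<in> Bi" "b \<in> Bj" "x = a + b" by blast
    have "- x = -a + -b" using ab by (simp add: minus_add ac)
    moreover have "-a \<in> Bi" "-b \<in> Bj" using ab si sj unfolding is_subgroup_def by auto
    ultimately show "- x \<in> ?W" by blast
  qed
  have inv: "\<forall>\<alpha>\<in>F. \<alpha> ` ?W \<subseteq> ?W"
  proof (intro ballI subsetI)
    fix \<alpha> x assume a: "\<alpha> \<in> F" "x \<in> \<alpha> ` ?W"
    then obtain a b where ab: "a \<in> Bi" "b \<in> Bj" "x = \<alpha> (a + b)" by blast
    hence "x = \<alpha> a + \<alpha> b" using hom a by simp
    moreover have "\<alpha> a \<in> Bi" "\<alpha> b \<in> Bj" using ab(1,2) ii ij a(1) by blast+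
    ultimately show "x \<in> ?W" by blast
  qed
  have WQ: "?W \<subseteq> Q" using saw by blast
  have g: "gen_subgroup (Q \<inter> ?W) = ?W" using gen_self[OF sg] WQ by (simp add: Int_absorb1)
  have idz: "id \<noteq> Z" using u by (metis id_apply)
  have reg: "\<forall>x\<in>Q \<inter> ?W - {0}. \<forall>y\<in>Q \<inter> ?W - {0}. \<exists>c\<in>F. c \<noteq> Z \<and> x + c y \<in> Q \<inter> ?W"
  proof (intro ballI)
    fix x y assume x: "x \<in> Q \<inter> ?W - {0}" and y: "y \<in> Q \<inter> ?W - {0}"
    have "x \<in> ?W" "x \<noteq> 0" "y \<in> ?W" "y \<noteq> 0" using x y by blast+
    hence "sameadd u x" "sameadd u y" using saw by blast+
    hence "sameadd x y" using sa_sym sa_trans by blast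
    hence "x + y \<in> Q" using L1 x by blast
    moreover have "x + y \<in> ?W" using sg x y unfolding is_subgroup_def by blast
    ultimately show "\<exists>c\<in>F. c \<noteq> Z \<and> x + c y \<in> Q \<inter> ?W" using idF idz by (intro bexI[of _ id]) auto
  qed
  have rW: "regular_subspace F ?W"
    unfolding regular_subspace_def nv_subspace_def using sg inv g reg by blast
  have "Bi \<subseteq> ?W"
  proof
    fix x assume "x \<in> Bi"
    moreover have "0 \<in> Bj" using sj is_subgroup_def by blast
    ultimately show "x \<in> ?W" by force
  qed
  hence WB: "?W = Bi" using bi rW unfolding is_block_def by blast
  have "Bj \<subseteq> ?W"
  proof
    fix x assume "x \<in> Bj"
    moreover have "0 \<in> Bi" using si is_subgroup_def by blast
    ultimately show "x \<in> ?W" by force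
  qed
  hence "Bj \<subseteq> Bi" using WB by simp
  moreover have "regular_subspace F Bi" using bi is_block_def by blast
  ultimately show ?thesis using bj unfolding is_block_def by blast
qed

lemma sep: assumes bi: "is_block F Bi" and bj: "is_block F Bj" and ne: "Bi \<noteq> Bj"
  and u: "u \<in> Bi" "u \<noteq> 0" and v: "v \<in> Bj" "v \<noteq> 0"
  shows "\<exists>\<alpha>\<in>F. \<exists>\<beta>\<in>F. \<exists>\<gamma>\<in>F. (\<forall>x\<in>Bi. \<alpha> x + \<beta> x = \<gamma> x) \<and> (\<forall>y\<in>Bj. \<alpha> y + \<beta> y = \<gamma> y \<longrightarrow> y = 0)"
proof -
  have "\<not> sameadd u v" using blocks_eq[OF bi bj u v] ne by blast
  then obtain \<alpha> \<beta> \<gamma> where abc: "\<alpha> \<in> F" "\<beta> \<in> F" "\<gamma> \<in> F"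
    and d: "\<not> (\<alpha> u + \<beta> u = \<gamma> u \<longleftrightarrow> \<alpha> v + \<beta> v = \<gamma> v)" unfolding sameadd_def by blast
  have uQ: "u \<in> Q" using block_props[OF bi] u by blast
  obtain g where g: "g \<in> F" "\<alpha> u + \<beta> u = g u" using Qdef[OF uQ abc(1,2)] by blast
  have gv: "\<alpha> v + \<beta> v \<noteq> g v"
  proof (cases "\<alpha> u + \<beta> u = \<gamma> u")
    case True
    hence "g = \<gamma>" using g fpf abc u by metis
    thus ?thesis using d True by simp
  next
    case False
    hence gg: "g \<noteq> \<gamma>" using g by auto
    have "\<alpha> v + \<beta> v = \<gamma> v" using d False by simp
    thus ?thesis using fpf[of g \<gamma> v] g abc v gg by auto
  qed
  have "\<forall>x\<in>Bi. \<alpha> x + \<beta> x = g x"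
  proof
    fix x assume x: "x \<in> Bi"
    show "\<alpha> x + \<beta> x = g x"
    proof (cases "x = 0")
      case True thus ?thesis using abc g(1) by (simp add: hom0)
    next
      case False thus ?thesis using block_sa[OF bi u(1) x u(2) False] g abc unfolding sameadd_def by blast
    qed
  qed
  moreover have "\<forall>y\<in>Bj. \<alpha> y + \<beta> y = g y \<longrightarrow> y = 0"
  proof (intro ballI impI)
    fix y assume y: "y \<in> Bj" "\<alpha> y + \<beta> y = g y"
    show "y = 0"
    proof (rule ccontr)
      assume "y \<noteq> 0"
      hence "sameadd y v" using block_sa[OF bj y(1) v(1) _ v(2)] by blast
      thus False using y gv g abc unfolding sameadd_def by blast
    qed
  qed
  ultimately show ?thesis using abc g by blast
qed

lemma sum_hom: "\<alpha> \<in> F \<Longrightarrow> \<alpha> (sum_list (map b xs)) = sum_list (map (\<lambda>k. \<alpha> (b k)) xs)"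
  by (induction xs) (auto simp: hom hom0)

lemma sum_add: "sum_list (map (\<lambda>k. f k + g k) xs) = sum_list (map f xs) + sum_list (map (g::_\<Rightarrow>'v) xs)"
  by (induction xs) (auto simp: ac)

lemma comp_eq: assumes ds: "internal_direct_sum B n" and inv: "\<forall>k<n. \<forall>\<alpha>\<in>F. \<alpha> ` B k \<subseteq> B k"
  and abc: "\<alpha> \<in> F" "\<beta> \<in> F" "\<gamma> \<in> F"
  and b: "\<forall>k<n. b k \<in> B k" "\<forall>k\<ge>n. b k = 0"
  and e: "\<alpha> (sum_list (map b [0..<n])) + \<beta> (sum_list (map b [0..<n])) = \<gamma> (sum_list (map b [0..<n]))"
  shows "\<forall>k<n. \<alpha> (b k) + \<beta> (b k) = \<gamma> (b k)"
proof -
  let ?x = "sum_list (map b [0..<n])"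
  define b1 where "b1 = (\<lambda>k. \<alpha> (b k) + \<beta> (b k))"
  define b2 where "b2 = (\<lambda>k. \<gamma> (b k))"
  have sg: "\<forall>k<n. is_subgroup (B k)" using ds internal_direct_sum_def by blast
  have m1: "\<forall>k<n. b1 k \<in> B k"
  proof (intro allI impI)
    fix k assume k: "k < n"
    have "\<alpha> (b k) \<in> B k" "\<beta> (b k) \<in> B k" using inv k b abc by blast+
    thus "b1 k \<in> B k" using sg k unfolding b1_def is_subgroup_def by blast
  qed
  have m2: "\<forall>k<n. b2 k \<in> B k" using inv b abc unfolding b2_def by blast
  have z1: "\<forall>k\<ge>n. b1 k = 0" using b(2) hom0[OF abc(1)] hom0[OF abc(2)] unfolding b1_def by simp
  have z2: "\<forall>k\<ge>n. b2 k = 0" using b(2) hom0[OF abc(3)] unfolding b2_def by simp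
  have s1: "\<gamma> ?x = sum_list (map b1 [0..<n])"
    using e abc by (simp add: b1_def sum_hom sum_add)
  have s2: "\<gamma> ?x = sum_list (map b2 [0..<n])"
    using abc by (simp add: b2_def sum_hom)
  have "\<exists>!c. (\<forall>i<n. c i \<in> B i) \<and> (\<forall>i\<ge>n. c i = 0) \<and> \<gamma> ?x = sum_list (map c [0..<n])"
    using ds[unfolded internal_direct_sum_def, THEN conjunct2, THEN spec, of "\<gamma> ?x"] .
  then obtain c where c: "\<forall>y. (\<forall>i<n. y i \<in> B i) \<and> (\<forall>i\<ge>n. y i = 0) \<and> \<gamma> ?x = sum_list (map y [0..<n]) \<longrightarrow> y = c"
    by (elim ex1E) blast
  have "b1 = c" using c m1 z1 s1 by blast
  moreover have "b2 = c" using c m2 z2 s2 by blast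
  ultimately have "b1 = b2" by simp
  thus ?thesis unfolding b1_def b2_def by metis
qed

end

lemma sum_single: "i < n \<Longrightarrow> \<forall>k. k \<noteq> i \<longrightarrow> b k = 0 \<Longrightarrow> sum_list (map b [0..<n]) = (b i :: 'v::monoid_add)"
proof (induction n)
  case 0 thus ?case by simp
next
  case (Suc m)
  show ?case
  proof (cases "i = m")
    case True
    have "\<forall>k\<in>set [0..<m]. b k = 0" using Suc True by auto
    hence "sum_list (map b [0..<m]) = 0" by (induction m) auto
    thus ?thesis using True by simp
  next
    case False
    thus ?thesis using Suc by simp
  qed
qed

fun conj_list :: "'f qf_fm list \<Rightarrow> 'f qf_fm" where
  "conj_list [] = Eq Var Var" | "conj_list (p # ps) = Conj p (conj_list ps)"

fun disj_list :: "'f qf_fm list \<Rightarrow> 'f qf_fm" where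
  "disj_list [] = Neg (Eq Var Var)" | "disj_list (p # ps) = Disj p (disj_list ps)"

lemma sat_conj: "sat (conj_list ps) x \<longleftrightarrow> (\<forall>p\<in>set ps. sat p x)"
  by (induction ps) auto
lemma sat_disj: "sat (disj_list ps) x \<longleftrightarrow> (\<exists>p\<in>set ps. sat p x)"
  by (induction ps) auto
lemma syms_conj: "syms_fm (conj_list ps) = (\<Union>p\<in>set ps. syms_fm p)"
  by (induction ps) auto
lemma syms_disj: "syms_fm (disj_list ps) = (\<Union>p\<in>set ps. syms_fm p)"
  by (induction ps) auto

theorem mainTheorem14:
  fixes F :: "('v::group_add \<Rightarrow> 'v) set" and B :: "nat \<Rightarrow> 'v set" and n :: nat
  assumes "near_vector_space F"
    and "commutative_nvs F"
    and "B ` {..<n} = {W. is_block F W}"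
    and "inj_on B {..<n}"
    and "internal_direct_sum B n"
  shows "(\<forall>i<n. qf_definable F (B i)) \<and> quasi_kernel F = (\<Union>i<n. B i)
         \<and> qf_definable F (quasi_kernel F)"
proof -
  interpret nvs F using assms(1,2) by unfold_locales
  have blk: "\<And>i. i < n \<Longrightarrow> is_block F (B i)" using assms(3) by blast
  have Qeq: "Q = (\<Union>i<n. B i)"
  proof
    show "Q \<subseteq> (\<Union>i<n. B i)"
    proof
      fix u assume "u \<in> Q"
      then obtain M where "is_block F M" "u \<in> M" using exists_block by blast
      thus "u \<in> (\<Union>i<n. B i)" using assms(3) by blast
    qed
    show "(\<Union>i<n. B i) \<subseteq> Q" using block_props blk by blast
  qed
  have inv: "\<forall>k<n. \<forall>\<alpha>\<in>F. \<alpha> ` B k \<subseteq> B k" using block_props blk by blast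
  have sgs: "\<And>k. k < n \<Longrightarrow> is_subgroup (B k)" using block_props blk by blast
  have def: "qf_definable F (B i)" if i: "i < n" for i
  proof (cases "B i \<subseteq> {0}")
    case True
    hence Bi: "B i = {0}" using sgs[OF i] unfolding is_subgroup_def by blast
    show ?thesis unfolding qf_definable_def
      by (rule exI[of _ "Eq Var Zero"]) (auto simp: Bi)
  next
    case False
    then obtain u where u: "u \<in> B i" "u \<noteq> 0" by blast
    let ?P = "\<lambda>j \<chi>. (\<forall>l\<in>syms_fm \<chi>. fbar_symbol F l) \<and> (\<forall>x\<in>B i. sat \<chi> x) \<and>
       (j < n \<and> j \<noteq> i \<longrightarrow> (\<forall>x b. sat \<chi> x \<longrightarrow> (\<forall>k<n. b k \<in> B k) \<longrightarrow> (\<forall>k\<ge>n. b k = 0) \<longrightarrow>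
          x = sum_list (map b [0..<n]) \<longrightarrow> b j = 0))"
    have ex: "\<exists>\<chi>. ?P j \<chi>" for j
    proof (cases "j < n \<and> j \<noteq> i \<and> (\<exists>v\<in>B j. v \<noteq> 0)")
      case True
      then obtain v where v: "v \<in> B j" "v \<noteq> 0" and j: "j < n" "j \<noteq> i" by blast
      have ne: "B i \<noteq> B j" using assms(4) i j unfolding inj_on_def by blast
      obtain \<alpha> \<beta> \<gamma> where abc: "\<alpha> \<in> F" "\<beta> \<in> F" "\<gamma> \<in> F"
        and p1: "\<forall>x\<in>B i. \<alpha> x + \<beta> x = \<gamma> x" and p2: "\<forall>y\<in>B j. \<alpha> y + \<beta> y = \<gamma> y \<longrightarrow> y = 0"
        using sep[OF blk[OF i] blk[OF j(1)] ne u v] by blast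
      let ?\<chi> = "Eq (App [\<alpha>, \<beta>] Var) (App [\<gamma>] Var)"
      have sat\<chi>: "sat ?\<chi> x \<longleftrightarrow> \<alpha> x + \<beta> x = \<gamma> x" for x by (simp add: fbar_act_def)
      have "?P j ?\<chi>"
      proof (intro conjI ballI impI allI)
        fix l assume "l \<in> syms_fm ?\<chi>"
        thus "fbar_symbol F l" using abc by (auto simp: fbar_symbol_def)
      next
        fix x assume "x \<in> B i" thus "sat ?\<chi> x" using p1 sat\<chi> by blast
      next
        fix x b assume "sat ?\<chi> x" "\<forall>k<n. b k \<in> B k" "\<forall>k\<ge>n. b k = 0" "x = sum_list (map b [0..<n])"
        hence "\<forall>k<n. \<alpha> (b k) + \<beta> (b k) = \<gamma> (b k)"
          using comp_eq[OF assms(5) inv abc] sat\<chi> by blast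
        thus "b j = 0" using p2 j \<open>\<forall>k<n. b k \<in> B k\<close> by blast
      qed
      thus ?thesis by blast
    next
      case False
      have "?P j (Eq Var Var)"
      proof (intro conjI ballI impI allI)
        fix x b assume "j < n \<and> j \<noteq> i" "\<forall>k<n. b k \<in> B k"
        thus "b j = 0" using False by blast
      qed auto
      thus ?thesis by blast
    qed
    obtain f where Pj: "\<And>j. ?P j (f j)" using ex by metis
    define \<phi> where "\<phi> = conj_list (map f [0..<n])"
    have "B i = {x. sat \<phi> x}"
    proof
      show "B i \<subseteq> {x. sat \<phi> x}"
      proof
        fix x assume x: "x \<in> B i"
        have "\<forall>j. sat (f j) x" using Pj x by blast
        thus "x \<in> {x. sat \<phi> x}" unfolding \<phi>_def by (simp add: sat_conj)
      qed
      show "{x. sat \<phi> x} \<subseteq> B i"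
      proof
        fix x assume "x \<in> {x. sat \<phi> x}"
        hence sx: "\<forall>j<n. sat (f j) x" unfolding \<phi>_def sat_conj by auto
        obtain b where b: "\<forall>k<n. b k \<in> B k" "\<forall>k\<ge>n. b k = 0" "x = sum_list (map b [0..<n])"
          using ex1_implies_ex[OF assms(5)[unfolded internal_direct_sum_def, THEN conjunct2, THEN spec, of x]] by blast
        have "\<forall>k. k \<noteq> i \<longrightarrow> b k = 0"
        proof (intro allI impI)
          fix k assume "k \<noteq> i"
          show "b k = 0"
          proof (cases "k < n")
            case True
            thus ?thesis using Pj[of k] sx b \<open>k \<noteq> i\<close> by blast
          next
            case False thus ?thesis using b by simp
          qed
        qed
        hence "x = b i" using sum_single[OF i] b by simp
        thus "x \<in> B i" using b i by simp
      qed
    qed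
    moreover have "\<forall>l\<in>syms_fm \<phi>. fbar_symbol F l"
    proof -
      have "\<forall>j. \<forall>l\<in>syms_fm (f j). fbar_symbol F l" using Pj by blast
      thus ?thesis unfolding \<phi>_def syms_conj by simp
    qed
    ultimately show ?thesis unfolding qf_definable_def by blast
  qed
  let ?R = "\<lambda>i \<phi>. (\<forall>l\<in>syms_fm \<phi>. fbar_symbol F l) \<and> B i = {x. sat \<phi> x}"
  have "\<exists>\<phi>. i < n \<longrightarrow> ?R i \<phi>" for i
    using def[of i] unfolding qf_definable_def by blast
  then obtain g where Ri: "\<And>i. i < n \<Longrightarrow> ?R i (g i)" by metis
  define \<psi> where "\<psi> = disj_list (map g [0..<n])"
  have R1: "\<And>i. i < n \<Longrightarrow> B i = {x. sat (g i) x}" using Ri by blast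
  have R2: "\<forall>i<n. \<forall>l\<in>syms_fm (g i). fbar_symbol F l" using Ri by blast
  have "Q = {x. sat \<psi> x}"
  proof -
    have "x \<in> Q \<longleftrightarrow> sat \<psi> x" for x
    proof -
      have "x \<in> Q \<longleftrightarrow> (\<exists>i<n. x \<in> B i)" unfolding Qeq by blast
      also have "\<dots> \<longleftrightarrow> (\<exists>i<n. sat (g i) x)" using R1 by blast
      also have "\<dots> \<longleftrightarrow> sat \<psi> x" unfolding \<psi>_def sat_disj by auto
      finally show ?thesis .
    qed
    thus ?thesis by blast
  qed
  moreover have "\<forall>l\<in>syms_fm \<psi>. fbar_symbol F l" using R2 unfolding \<psi>_def syms_disj by simp
  ultimately have "qf_definable F Q" unfolding qf_definable_def by blast
  thus ?thesis using def Qeq by blast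
qed

end
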